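(* Let $\beta$ be an ordered partition of $N$. The set $X^\beta=\{t_\eta w: w\in\bar W^\beta,\ \eta\in\bar P_-(w)\}\subseteq W$ is a complete set of representatives of the double coset space $\bar W\backslash W/\bar W_\beta$. Moreover $X^\beta\subseteq W^\beta$.
   Context: Fix $N\ge2$. $\bar P=\bigoplus_{i=1}^N\mathbb Z\epsilon_i$ with $(\epsilon_i,\epsilon_j)=\delta_{ij}$; $\bar R=\{\alpha_{ij}=\epsilon_i-\epsilon_j:i\ne j\}$, $\bar R_+=\{\alpha_{ij}:i<j\}$, $\alpha_i=\alpha_{i,i+1}$; $\bar P_-=\{\eta\in\bar P:(\eta,\alpha)\le0\ \forall\alpha\in\bar R_+\}$. $\bar W=\mathfrak S_N$ acts by permuting indices; $W=\bar W\ltimes\bar P$ with elements $wt_\eta$, $wt_\eta w^{-1}=t_{w(\eta)}$. Affine roots (with formal $\delta$): $R=\{\bar\alpha+k\delta\}$, $R_+=\{\bar\alpha+k\delta:\bar\alpha\in\bar R_+,k\ge0\}\cup\{-\bar\alpha+k\delta:\bar\alpha\in\bar R_+,k>0\}$, $R_-=R\setminus R_+$; $W$ acts on $R$ by $w(\bar\alpha+k\delta)=w(\bar\alpha)+k\delta$, $t_\eta(\bar\alpha+k\delta)=\bar\alpha+(k-(\eta,\bar\alpha))\delta$; $l(w)=\#(R_+\cap w^{-1}(R_-))$. An ordered partition $\beta$ of $N$ gives blocks of consecutive indices of sizes $\beta_1,\dots,\beta_r$; $\bar R_\beta=\{\alpha_{ij}:i,j\text{ in the same block}\}$, $\bar R_{\beta,+}=\bar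 R_\beta\cap\bar R_+$, $\bar W_\beta$ the subgroup generated by $s_{\alpha_i}$, $\alpha_i\in\bar R_\beta$; $W^\beta=\{w\in W:l(wu)\ge l(w)\ \forall u\in\bar W_\beta\}$, $\bar W^\beta=W^\beta\cap\bar W$. For $w\in\bar W^\beta$, $\eta_w\in\bar P_-$ is defined by $(\eta_w,\epsilon_1)=0$ and $(\eta_w,\alpha_i)=-1$ if $\alpha_i\in w(\bar R_+\setminus\bar R_{\beta,+})$, $0$ otherwise ($1\le i\le N-1$); $\bar P_-(w)=\{\eta+\eta_w:\eta\in\bar P_-\}$. *)

theory Defs
  imports "HOL-Combinatorics.Combinatorics"
begin

(* Indices are 0-based: epsilon_1..epsilon_N become indices 0..N-1.
   Pbar = Z^N: functions nat => int vanishing outside {0..<N}.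
   An element (eta, w) of the extended affine Weyl group W stands for t_eta w. *)

definition Pbar :: "nat \<Rightarrow> (nat \<Rightarrow> int) set" where
  "Pbar N = {\<eta>. \<forall>i\<ge>N. \<eta> i = 0}"

definition Pbar_minus :: "nat \<Rightarrow> (nat \<Rightarrow> int) set" where
  "Pbar_minus N = {\<eta> \<in> Pbar N. \<forall>i j. i < j \<and> j < N \<longrightarrow> \<eta> i - \<eta> j \<le> 0}"

definition Wbar :: "nat \<Rightarrow> (nat \<Rightarrow> nat) set" where
  "Wbar N = {w. w permutes {0..<N}}"

type_synonym waff = "(nat \<Rightarrow> int) \<times> (nat \<Rightarrow> nat)"

definition Waff :: "nat \<Rightarrow> waff set" where
  "Waff N = Pbar N \<times> Wbar N"

(* action of a permutation on weights: w(eps_i) = eps_(w i) *)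
definition wact :: "(nat \<Rightarrow> nat) \<Rightarrow> (nat \<Rightarrow> int) \<Rightarrow> (nat \<Rightarrow> int)" where
  "wact w \<eta> = \<eta> \<circ> inv w"

(* (t_eta w)(t_mu v) = t_(eta + w mu) (w v) *)
definition wmult :: "waff \<Rightarrow> waff \<Rightarrow> waff" where
  "wmult x y = (\<lambda>j. fst x j + wact (snd x) (fst y) j, snd x \<circ> snd y)"

(* affine root (i,j,k) = eps_i - eps_j + k delta, with i \<noteq> j, i,j < N *)
definition affroots :: "nat \<Rightarrow> (nat \<times> nat \<times> int) set" where
  "affroots N = {(i,j,k). i < N \<and> j < N \<and> i \<noteq> j}"

definition pos_root :: "nat \<times> nat \<times> int \<Rightarrow> bool" where
  "pos_root a = (case a of (i,j,k) \<Rightarrow> (i < j \<and> k \<ge> 0) \<or> (j < i \<and> k > 0))"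

definition root_act :: "waff \<Rightarrow> nat \<times> nat \<times> int \<Rightarrow> nat \<times> nat \<times> int" where
  "root_act x a = (case a of (i,j,k) \<Rightarrow>
     (snd x i, snd x j, k - (fst x (snd x i) - fst x (snd x j))))"

definition len :: "nat \<Rightarrow> waff \<Rightarrow> nat" where
  "len N x = card {a \<in> affroots N. pos_root a \<and> \<not> pos_root (root_act x a)}"

definition ordered_partition :: "nat \<Rightarrow> nat list \<Rightarrow> bool" where
  "ordered_partition N \<beta> \<longleftrightarrow> (\<forall>b\<in>set \<beta>. 0 < b) \<and> sum_list \<beta> = N"

definition same_block :: "nat list \<Rightarrow> nat \<Rightarrow> nat \<Rightarrow> bool" where
  "same_block \<beta> a b \<longleftrightarrow> (\<exists>m < length \<beta>.
      sum_list (take m \<beta>) \<le> a \<and> a < sum_list (take (Suc m) \<beta>) \<and>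
      sum_list (take m \<beta>) \<le> b \<and> b < sum_list (take (Suc m) \<beta>))"

(* Wbar_beta: subgroup generated by the simple reflections s_(alpha_i), alpha_i in R_beta
   (finite group, generators are involutions, so the monoid closure suffices) *)
inductive_set Wbar_beta :: "nat \<Rightarrow> nat list \<Rightarrow> (nat \<Rightarrow> nat) set" for N \<beta> where
  id: "id \<in> Wbar_beta N \<beta>"
| step: "\<lbrakk>v \<in> Wbar_beta N \<beta>; Suc i < N; same_block \<beta> i (Suc i)\<rbrakk>
           \<Longrightarrow> transpose i (Suc i) \<circ> v \<in> Wbar_beta N \<beta>"

definition W_beta :: "nat \<Rightarrow> nat list \<Rightarrow> waff set" where
  "W_beta N \<beta> = {x \<in> Waff N. \<forall>u \<in> Wbar_beta N \<beta>. len N (wmult x (\<lambda>_. 0, u)) \<ge> len N x}"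

definition Wbar_beta_min :: "nat \<Rightarrow> nat list \<Rightarrow> (nat \<Rightarrow> nat) set" where
  "Wbar_beta_min N \<beta> = {w \<in> Wbar N. (\<lambda>_. 0, w) \<in> W_beta N \<beta>}"

(* alpha_i in w(Rbar_+ \ Rbar_(beta,+))  iff  w^-1(alpha_i) = alpha_(w^-1 i, w^-1 (i+1))
   is positive and not in R_beta *)
definition desc_cond :: "nat list \<Rightarrow> (nat \<Rightarrow> nat) \<Rightarrow> nat \<Rightarrow> bool" where
  "desc_cond \<beta> w i \<longleftrightarrow> inv w i < inv w (Suc i) \<and> \<not> same_block \<beta> (inv w i) (inv w (Suc i))"

(* eta_w: (eta_w, eps_1) = 0, (eta_w, alpha_i) = -1 if desc_cond, else 0 *)
definition eta_w :: "nat \<Rightarrow> nat list \<Rightarrow> (nat \<Rightarrow> nat) \<Rightarrow> (nat \<Rightarrow> int)" where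
  "eta_w N \<beta> w = (\<lambda>j. if j < N then (\<Sum>i<j. if desc_cond \<beta> w i then 1 else 0) else 0)"

definition Pbar_minus_w :: "nat \<Rightarrow> nat list \<Rightarrow> (nat \<Rightarrow> nat) \<Rightarrow> (nat \<Rightarrow> int) set" where
  "Pbar_minus_w N \<beta> w = {(\<lambda>j. \<eta> j + eta_w N \<beta> w j) | \<eta>. \<eta> \<in> Pbar_minus N}"

definition X_beta :: "nat \<Rightarrow> nat list \<Rightarrow> waff set" where
  "X_beta N \<beta> = {(\<eta>, w) | \<eta> w. w \<in> Wbar_beta_min N \<beta> \<and> \<eta> \<in> Pbar_minus_w N \<beta> w}"

end

theory Submission
  imports Defs
begin

locale bsetup =
  fixes N :: nat and \<beta> :: "nat list"
  assumes sumN: "sum_list \<beta> = N"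
begin

definition S :: "nat \<Rightarrow> nat" where "S m = sum_list (take m \<beta>)"
definition blk :: "nat \<Rightarrow> nat" where "blk a = card {m. m < length \<beta> \<and> S (Suc m) \<le> a}"

lemma S_mono: "m \<le> m' \<Longrightarrow> S m \<le> S m'"
proof -
  assume "m \<le> m'"
  then obtain d where "m' = m + d" by (metis le_add_diff_inverse)
  then show ?thesis unfolding S_def by (simp add: take_add)
qed

lemma S_len: "S (length \<beta>) = N" using sumN by (simp add: S_def)

lemma blk_mono: "a \<le> b \<Longrightarrow> blk a \<le> blk b"
  unfolding blk_def by (rule card_mono) auto

lemma blk_eq: assumes "m < length \<beta>" "S m \<le> a" "a < S (Suc m)" shows "blk a = m"
proof -
  have "{m'. m' < length \<beta> \<and> S (Suc m') \<le> a} = {..<m}"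
  proof safe
    fix m' assume "m' < length \<beta>" "S (Suc m') \<le> a"
    show "m' < m"
    proof (rule ccontr)
      assume "\<not> m' < m" then have "S (Suc m) \<le> S (Suc m')" by (intro S_mono) simp
      with assms \<open>S (Suc m') \<le> a\<close> show False by simp
    qed
  next
    fix m' assume "m' < m"
    then show "m' < length \<beta>" using assms by simp
    have "S (Suc m') \<le> S m" using \<open>m' < m\<close> by (intro S_mono) simp
    then show "S (Suc m') \<le> a" using assms by simp
  qed
  then show ?thesis unfolding blk_def by simp
qed

lemma exists_block: assumes "a < N" shows "\<exists>m<length \<beta>. S m \<le> a \<and> a < S (Suc m)"
proof -
  have ne: "0 < length \<beta>" using assms sumN by auto
  have ex: "a < S (Suc (length \<beta> - 1))" using ne S_len assms by simp
  define m where "m = (LEAST m. a < S (Suc m))"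
  have m1: "a < S (Suc m)" unfolding m_def by (rule LeastI, rule ex)
  have m2: "m \<le> length \<beta> - 1" unfolding m_def by (rule Least_le, rule ex)
  have m3: "S m \<le> a"
  proof (cases m)
    case 0 then show ?thesis by (simp add: S_def)
  next
    case (Suc m')
    then have "\<not> a < S (Suc m')" using not_less_Least[of m' "\<lambda>m. a < S (Suc m)"] m_def by simp
    then show ?thesis using Suc by simp
  qed
  have "m < length \<beta>" using m2 ne by linarith
  then show ?thesis using m1 m3 by (intro exI[of _ m]) auto
qed

lemma same_block_iff: "same_block \<beta> a b \<longleftrightarrow> a < N \<and> b < N \<and> blk a = blk b"
proof
  assume "same_block \<beta> a b"
  then obtain m where m: "m < length \<beta>" "S m \<le> a" "a < S (Suc m)" "S m \<le> b" "b < S (Suc m)"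
    unfolding same_block_def S_def by blast
  have "S (Suc m) \<le> N" using S_mono[of "Suc m" "length \<beta>"] m S_len by simp
  then show "a < N \<and> b < N \<and> blk a = blk b" using m blk_eq by auto
next
  assume h: "a < N \<and> b < N \<and> blk a = blk b"
  obtain m where m: "m < length \<beta>" "S m \<le> a" "a < S (Suc m)" using exists_block h by blast
  obtain m' where m': "m' < length \<beta>" "S m' \<le> b" "b < S (Suc m')" using exists_block h by blast
  have "m = m'" using blk_eq[OF m] blk_eq[OF m'] h by simp
  then show "same_block \<beta> a b" unfolding same_block_def using m m' unfolding S_def by (intro exI[of _ m]) simp
qed

lemma blk_between: "p \<le> c \<Longrightarrow> c \<le> q \<Longrightarrow> blk p = blk q \<Longrightarrow> blk c = blk p"
  using blk_mono by (metis le_antisym)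

lemma blk_lt: "blk p < blk q \<Longrightarrow> p < q"
  using blk_mono by (metis leD leI)

end

context bsetup begin

definition bpres :: "(nat \<Rightarrow> nat) \<Rightarrow> bool" where
  "bpres v \<longleftrightarrow> v permutes {0..<N} \<and> (\<forall>p. blk (v p) = blk p)"

lemma transpose_blk: "blk i = blk (Suc i) \<Longrightarrow> blk (transpose i (Suc i) z) = blk z"
  by (auto simp: transpose_def)

lemma Wbar_beta_bpres: "v \<in> Wbar_beta N \<beta> \<Longrightarrow> bpres v"
proof (induction rule: Wbar_beta.induct)
  case id then show ?case by (auto simp: bpres_def permutes_def)
next
  case (step v i)
  have b: "blk i = blk (Suc i)" using step(3) same_block_iff by simp
  have "transpose i (Suc i) permutes {0..<N}" using step(2) by (intro permutes_swap_id) auto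
  then show ?case using step(4) b transpose_blk unfolding bpres_def
    by (auto intro: permutes_compose)
qed

lemma Wbar_beta_comp: "a \<in> Wbar_beta N \<beta> \<Longrightarrow> b \<in> Wbar_beta N \<beta> \<Longrightarrow> a \<circ> b \<in> Wbar_beta N \<beta>"
proof (induction rule: Wbar_beta.induct)
  case id then show ?case by simp
next
  case (step v i)
  have "transpose i (Suc i) \<circ> (v \<circ> b) \<in> Wbar_beta N \<beta>"
    using step by (intro Wbar_beta.step) (auto simp: o_def)
  then show ?case by (simp only: comp_assoc)
qed

lemma trans_in: "Suc p < N \<Longrightarrow> blk p = blk (Suc p) \<Longrightarrow> transpose p (Suc p) \<in> Wbar_beta N \<beta>"
  using Wbar_beta.step[OF Wbar_beta.id, of p N \<beta>] same_block_iff by simp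

lemma bpres_inv: "bpres v \<Longrightarrow> bpres (inv v)"
  unfolding bpres_def by (metis permutes_inv permutes_inverses(1))

lemma bpres_comp: "bpres v \<Longrightarrow> bpres u \<Longrightarrow> bpres (v \<circ> u)"
  unfolding bpres_def by (auto intro: permutes_compose)

lemma bpres_order: "bpres v \<Longrightarrow> blk p < blk q \<Longrightarrow> v p < v q"
  unfolding bpres_def using blk_lt by metis

lemma adj_le:
  fixes f :: "nat \<Rightarrow> 'a::order"
  assumes adj: "\<forall>i. Suc i < N \<longrightarrow> blk i = blk (Suc i) \<longrightarrow> f i \<le> f (Suc i)"
  shows "p \<le> q \<Longrightarrow> q < N \<Longrightarrow> blk p = blk q \<Longrightarrow> f p \<le> f q"
proof (induction q)
  case 0 then show ?case by simp
next
  case (Suc q)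
  show ?case
  proof (cases "p = Suc q")
    case True then show ?thesis by simp
  next
    case False
    then have pq: "p \<le> q" using Suc by simp
    have bq: "blk q = blk p" using blk_between[of p q "Suc q"] pq Suc by simp
    then have "f p \<le> f q" using Suc pq by simp
    also have "f q \<le> f (Suc q)" using adj Suc bq by simp
    finally show ?thesis .
  qed
qed

lemma adj_lt:
  fixes f :: "nat \<Rightarrow> 'a::order"
  assumes adj: "\<forall>i. Suc i < N \<longrightarrow> blk i = blk (Suc i) \<longrightarrow> f i < f (Suc i)"
  shows "p < q \<Longrightarrow> q < N \<Longrightarrow> blk p = blk q \<Longrightarrow> f p < f q"
proof (induction q)
  case 0 then show ?case by simp
next
  case (Suc q)
  show ?case
  proof (cases "p = q")
    case True then show ?thesis using adj Suc by simp
  next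
    case False
    then have pq: "p < q" using Suc by simp
    have bq: "blk q = blk p" using blk_between[of p q "Suc q"] pq Suc by simp
    then have "f p < f q" using Suc pq by simp
    also have "f q < f (Suc q)" using adj Suc bq by simp
    finally show ?thesis .
  qed
qed

definition invs :: "waff \<Rightarrow> (nat \<times> nat \<times> int) set" where
  "invs x = {a \<in> affroots N. pos_root a \<and> \<not> pos_root (root_act x a)}"

lemma len_invs: "len N x = card (invs x)" by (simp add: len_def invs_def)

lemma wmult0: "wmult x (\<lambda>_. 0, u) = (fst x, snd x \<circ> u)"
  by (simp add: wmult_def wact_def o_def)

lemma root_act_wmult0: "root_act (wmult x (\<lambda>_. 0, u)) a = root_act x (root_act (\<lambda>_. 0, u) a)"
  by (cases a) (simp add: wmult0 root_act_def)

lemma root_act0: "root_act (\<lambda>_. 0, u) (i, j, k) = (u i, u j, k)"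
  by (simp add: root_act_def)

lemma root_act_pair: "root_act (\<eta>, w) (i, j, k) = (w i, w j, k - (\<eta> (w i) - \<eta> (w j)))"
  by (simp add: root_act_def)

lemma invs_mem: "(i, j, k) \<in> invs (\<eta>, w) \<longleftrightarrow> i < N \<and> j < N \<and> i \<noteq> j \<and> pos_root (i, j, k) \<and> \<not> pos_root (w i, w j, k - (\<eta> (w i) - \<eta> (w j)))"
  by (simp add: invs_def affroots_def root_act_pair)

lemma inj_triple: "inj g \<Longrightarrow> inj_on (\<lambda>(i::nat, j::nat, k::int). (g i, g j, k)) A"
  unfolding inj_on_def by (clarify, simp add: inj_eq)

lemma pos_root_iff: "pos_root (i, j, k) \<longleftrightarrow> (i < j \<and> 0 \<le> k) \<or> (j < i \<and> 0 < k)"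
  by (simp add: pos_root_def)

lemma finite_invs: assumes inj: "inj_on (snd x) {0..<N}" shows "finite (invs x)"
proof -
  obtain \<eta> w where x: "x = (\<eta>, w)" by (cases x)
  define B where "B = (\<Sum>i<N. \<Sum>j<N. \<bar>\<eta> (w i) - \<eta> (w j)\<bar>)"
  have "invs x \<subseteq> {..<N} \<times> {..<N} \<times> {0..B}"
  proof
    fix a assume a: "a \<in> invs x"
    obtain i j k where ijk: "a = (i, j, k)" by (cases a)
    have "(i, j, k) \<in> invs (\<eta>, w)" using a unfolding ijk x .
    then have h: "i < N" "j < N" "i \<noteq> j" "pos_root (i,j,k)" "\<not> pos_root (w i, w j, k - (\<eta> (w i) - \<eta> (w j)))"
      unfolding invs_mem by blast+
    have wne: "w i \<noteq> w j" using inj_on_contraD[OF inj[unfolded x snd_conv] h(3)] h(1,2) by simp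
    have k0: "0 \<le> k" using h(4) unfolding pos_root_iff by auto
    have k1: "k \<le> \<eta> (w i) - \<eta> (w j)"
      using h(5) wne unfolding pos_root_iff by (cases "w i < w j") auto
    have "\<bar>\<eta> (w i) - \<eta> (w j)\<bar> \<le> (\<Sum>j'<N. \<bar>\<eta> (w i) - \<eta> (w j')\<bar>)"
      by (rule member_le_sum[of j "{..<N}" "\<lambda>j'. \<bar>\<eta> (w i) - \<eta> (w j')\<bar>"]) (use h(2) in auto)
    also have "\<dots> \<le> B" unfolding B_def
      by (rule member_le_sum[of i "{..<N}" "\<lambda>i. \<Sum>j<N. \<bar>\<eta> (w i) - \<eta> (w j)\<bar>"]) (use h(1) in \<open>auto intro: sum_nonneg\<close>)
    finally have "k \<le> B" using k1 by linarith
    then show "a \<in> {..<N} \<times> {..<N} \<times> {0..B}" using h(1,2) k0 ijk by simp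
  qed
  then show ?thesis by (rule finite_subset) auto
qed

lemma len_mono_G:
  assumes w: "w permutes {0..<N}"
    and binc: "\<forall>p q. p < q \<longrightarrow> q < N \<longrightarrow> blk p = blk q \<longrightarrow> w p < w q"
    and eta: "\<forall>p q. p < q \<longrightarrow> q < N \<longrightarrow> blk p = blk q \<longrightarrow> \<eta> (w p) \<le> \<eta> (w q)"
    and u: "bpres u"
  shows "len N (\<eta>, w) \<le> len N (wmult (\<eta>, w) (\<lambda>_. 0, u))"
proof -
  have up: "u permutes {0..<N}" using u bpres_def by simp
  have uip: "inv u permutes {0..<N}" using permutes_inv[OF up] .
  have ui: "bpres (inv u)" using bpres_inv[OF u] .
  define f where "f = (\<lambda>(i::nat, j::nat, k::int). (inv u i, inv u j, k))"
  have inj: "inj_on f (invs (\<eta>, w))"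
    unfolding f_def by (rule inj_triple[OF permutes_inj[OF uip]])
  have fin: "finite (invs (wmult (\<eta>, w) (\<lambda>_. 0, u)))"
    using permutes_inj_on[OF permutes_compose[OF up w]] by (intro finite_invs) (simp add: wmult0)
  have sub: "f ` invs (\<eta>, w) \<subseteq> invs (wmult (\<eta>, w) (\<lambda>_. 0, u))"
  proof
    fix b assume "b \<in> f ` invs (\<eta>, w)"
    then obtain i j k where ijk: "(i, j, k) \<in> invs (\<eta>, w)" "b = (inv u i, inv u j, k)"
      unfolding f_def by auto
    have h: "i < N" "j < N" "i \<noteq> j" "pos_root (i,j,k)" "\<not> pos_root (w i, w j, k - (\<eta> (w i) - \<eta> (w j)))"
      using ijk(1) unfolding invs_mem by blast+
    have r1: "inv u i < N" "inv u j < N" using h permutes_in_image[OF uip] by auto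
    have r2: "inv u i \<noteq> inv u j" using h permutes_inverses(1)[OF up] by metis
    have ra: "root_act (wmult (\<eta>, w) (\<lambda>_. 0, u)) b = root_act (\<eta>, w) (i, j, k)"
      unfolding root_act_wmult0 ijk root_act0 permutes_inverses(1)[OF up] ..
    have pos: "pos_root b"
    proof (cases "k > 0")
      case True then show ?thesis using r2 ijk by (auto simp: pos_root_def)
    next
      case False
      then have k: "k = 0" "i < j" using h(4) by (auto simp: pos_root_def)
      show ?thesis
      proof (cases "blk i = blk j")
        case True
        then have "w i < w j" "\<eta> (w i) \<le> \<eta> (w j)" using binc eta k h by auto
        then have False using h(5) k by (auto simp: pos_root_def)
        then show ?thesis ..
      next
        case False
        then have "blk i < blk j" using blk_mono[of i j] k by simp
        then have "inv u i < inv u j" using bpres_order[OF ui] by simp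
        then show ?thesis using ijk k by (simp add: pos_root_def)
      qed
    qed
    show "b \<in> invs (wmult (\<eta>, w) (\<lambda>_. 0, u))"
      unfolding invs_def affroots_def mem_Collect_eq using ra pos r1 r2 h(5) ijk(2) by (simp add: root_act_pair)
  qed
  show ?thesis unfolding len_invs using card_inj_on_le[OF inj sub fin] .
qed

lemma transpose_lt: "i < j \<Longrightarrow> \<not> (i = p \<and> j = Suc p) \<Longrightarrow> transpose p (Suc p) i < transpose p (Suc p) j"
  by (auto simp: transpose_def)

lemma len_drop:
  assumes w: "w permutes {0..<N}" and p: "Suc p < N" and d: "w (Suc p) < w p"
  shows "len N (wmult (\<lambda>_. 0, w) (\<lambda>_. 0, transpose p (Suc p))) < len N (\<lambda>_. 0, w)"
proof -
  define s where "s = transpose p (Suc p)"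
  have sp: "s permutes {0..<N}" unfolding s_def using p by (intro permutes_swap_id) auto
  define f where "f = (\<lambda>(i::nat, j::nat, k::int). (s i, s j, k))"
  define r where "r = (p, Suc p, 0::int)"
  have rin: "r \<in> invs (\<lambda>_. 0, w)"
    unfolding r_def invs_mem using p d by (simp add: pos_root_def)
  have fin: "finite (invs (\<lambda>_. 0, w))"
    using permutes_inj_on[OF w] by (intro finite_invs) simp
  have inj: "inj_on f (invs (wmult (\<lambda>_. 0, w) (\<lambda>_. 0, s)))"
    unfolding f_def by (rule inj_triple[OF permutes_inj[OF sp]])
  have sub: "f ` invs (wmult (\<lambda>_. 0, w) (\<lambda>_. 0, s)) \<subseteq> invs (\<lambda>_. 0, w) - {r}"
  proof
    fix b assume "b \<in> f ` invs (wmult (\<lambda>_. 0, w) (\<lambda>_. 0, s))"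
    then obtain i j k where ijk: "(i, j, k) \<in> invs (wmult (\<lambda>_. 0, w) (\<lambda>_. 0, s))" "b = (s i, s j, k)"
      unfolding f_def by auto
    have ra: "root_act (wmult (\<lambda>_. 0, w) (\<lambda>_. 0, s)) (i, j, k) = (w (s i), w (s j), k)"
      unfolding root_act_wmult0 root_act0 by (simp add: root_act_pair)
    have h: "i < N" "j < N" "i \<noteq> j" "pos_root (i,j,k)" "\<not> pos_root (w (s i), w (s j), k)"
      using ijk(1) ra unfolding invs_def affroots_def by simp_all
    have r1: "s i < N" "s j < N" using h permutes_in_image[OF sp] by auto
    have r2: "s i \<noteq> s j" using h permutes_inj[OF sp] by (auto simp: inj_def)
    have pos: "pos_root b"
    proof (cases "k > 0")
      case True then show ?thesis using r2 ijk by (auto simp: pos_root_def)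
    next
      case False
      then have k: "k = 0" "i < j" using h(4) by (auto simp: pos_root_def)
      have "\<not> (i = p \<and> j = Suc p)"
      proof
        assume "i = p \<and> j = Suc p"
        then have "s i = Suc p" "s j = p" unfolding s_def by auto
        then show False using h(5) d k by (auto simp: pos_root_def)
      qed
      then have "s i < s j" using transpose_lt k unfolding s_def by blast
      then show ?thesis using ijk k by (simp add: pos_root_def)
    qed
    have nr: "b \<noteq> r"
    proof
      assume "b = r"
      then have "s i = p" "s j = Suc p" "k = 0" using ijk r_def by auto
      then have "i = Suc p" "j = p" unfolding s_def by (auto simp: transpose_def split: if_splits)
      then show False using h(4) \<open>k = 0\<close> by (auto simp: pos_root_def)
    qed
    show "b \<in> invs (\<lambda>_. 0, w) - {r}"
      using pos r1 r2 h(5) ijk(2) nr by (simp add: invs_mem)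
  qed
  have "card (invs (wmult (\<lambda>_. 0, w) (\<lambda>_. 0, s))) \<le> card (invs (\<lambda>_. 0, w) - {r})"
    using card_inj_on_le[OF inj sub] fin by simp
  also have "\<dots> < card (invs (\<lambda>_. 0, w))"
    using card_Diff1_less[OF fin rin] .
  finally show ?thesis unfolding len_invs s_def .
qed

lemma min_binc:
  assumes w: "w \<in> Wbar_beta_min N \<beta>"
  shows "p < q \<Longrightarrow> q < N \<Longrightarrow> blk p = blk q \<Longrightarrow> w p < w q"
proof -
  have wp: "w permutes {0..<N}" using w by (simp add: Wbar_beta_min_def Wbar_def)
  have wb: "(\<lambda>_. 0, w) \<in> W_beta N \<beta>" using w by (simp add: Wbar_beta_min_def)
  have adj: "\<forall>i. Suc i < N \<longrightarrow> blk i = blk (Suc i) \<longrightarrow> w i < w (Suc i)"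
  proof (intro allI impI)
    fix i assume i: "Suc i < N" "blk i = blk (Suc i)"
    show "w i < w (Suc i)"
    proof (rule ccontr)
      assume "\<not> w i < w (Suc i)"
      moreover have "w i \<noteq> w (Suc i)" using permutes_inj[OF wp] unfolding inj_def by (metis n_not_Suc_n)
      ultimately have "w (Suc i) < w i" by simp
      then have "len N (wmult (\<lambda>_. 0, w) (\<lambda>_. 0, transpose i (Suc i))) < len N (\<lambda>_. 0, w)"
        using len_drop[OF wp i(1)] by simp
      moreover have "transpose i (Suc i) \<in> Wbar_beta N \<beta>" using trans_in i by simp
      ultimately show False using wb unfolding W_beta_def by force
    qed
  qed
  show "p < q \<Longrightarrow> q < N \<Longrightarrow> blk p = blk q \<Longrightarrow> w p < w q" using adj_lt[OF adj] by blast
qed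

end

lemma mono_adj:
  fixes f :: "nat \<Rightarrow> 'a::order"
  assumes adj: "\<forall>i. Suc i < N \<longrightarrow> f i \<le> f (Suc i)"
  shows "i \<le> j \<Longrightarrow> j < N \<Longrightarrow> f i \<le> f j"
proof (induction j)
  case 0 then show ?case by simp
next
  case (Suc j)
  show ?case
  proof (cases "i = Suc j")
    case True then show ?thesis by simp
  next
    case False
    then have "f i \<le> f j" using Suc by simp
    also have "f j \<le> f (Suc j)" using adj Suc by simp
    finally show ?thesis .
  qed
qed

context bsetup begin

definition R :: "(nat \<Rightarrow> int) \<Rightarrow> nat \<Rightarrow> nat \<Rightarrow> bool" where
  "R l p q \<longleftrightarrow> l p < l q \<or> (l p = l q \<and> (blk q < blk p \<or> (blk q = blk p \<and> p < q)))"

lemma R_trans: "R l p q \<Longrightarrow> R l q r \<Longrightarrow> R l p r"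
  unfolding R_def by auto

lemma R_irrefl: "\<not> R l p p"
  unfolding R_def by auto

lemma R_total: "p \<noteq> q \<Longrightarrow> R l p q \<or> R l q p"
  unfolding R_def by auto

lemma R_asym: "R l p q \<Longrightarrow> \<not> R l q p"
  unfolding R_def by auto

definition rank :: "(nat \<Rightarrow> int) \<Rightarrow> nat \<Rightarrow> nat" where
  "rank l p = card {q \<in> {0..<N}. R l q p}"

definition sig :: "(nat \<Rightarrow> int) \<Rightarrow> nat \<Rightarrow> nat" where
  "sig l j = (if j < N then rank l j else j)"

lemma rank_lt: assumes "p < N" "q < N" "R l p q" shows "rank l p < rank l q"
proof -
  have sub: "{r \<in> {0..<N}. R l r p} \<subseteq> {r \<in> {0..<N}. R l r q}"
    by (auto intro: R_trans[OF _ assms(3)])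
  have "p \<in> {r \<in> {0..<N}. R l r q}" "p \<notin> {r \<in> {0..<N}. R l r p}" using assms R_irrefl by auto
  then have "{r \<in> {0..<N}. R l r p} \<subset> {r \<in> {0..<N}. R l r q}"
    using sub by blast
  then show ?thesis unfolding rank_def by (intro psubset_card_mono) auto
qed

lemma rank_bound: assumes "p < N" shows "rank l p < N"
proof -
  have "{q \<in> {0..<N}. R l q p} \<subseteq> {0..<N} - {p}" using R_irrefl by blast
  then have "rank l p \<le> card ({0..<N} - {p})" unfolding rank_def by (intro card_mono) auto
  also have "\<dots> = N - 1" using assms by simp
  finally show ?thesis using assms by simp
qed

lemma rank_cong: assumes "\<forall>q<N. l q = l' q" "p < N" shows "rank l p = rank l' p"
proof -
  have "{q \<in> {0..<N}. R l q p} = {q \<in> {0..<N}. R l' q p}"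
    using assms unfolding R_def by auto
  then show ?thesis unfolding rank_def by simp
qed

lemma sig_iff: assumes "p < N" "q < N" shows "sig l p < sig l q \<longleftrightarrow> R l p q"
proof
  assume "R l p q" then show "sig l p < sig l q" using rank_lt assms by (simp add: sig_def)
next
  assume a: "sig l p < sig l q"
  show "R l p q"
  proof (rule ccontr)
    assume "\<not> R l p q"
    moreover have "p \<noteq> q" using a by auto
    ultimately have "R l q p" using R_total by blast
    then have "sig l q < sig l p" using rank_lt assms by (simp add: sig_def)
    then show False using a by simp
  qed
qed

lemma sig_perm: "sig l permutes {0..<N}"
proof (rule bij_imp_permutes)
  have inj: "inj_on (sig l) {0..<N}"
  proof (rule inj_onI)
    fix p q assume pq: "p \<in> {0..<N}" "q \<in> {0..<N}" "sig l p = sig l q"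
    show "p = q"
    proof (rule ccontr)
      assume "p \<noteq> q"
      then have "R l p q \<or> R l q p" using R_total by blast
      then show False using sig_iff[of p q l] sig_iff[of q p l] pq by auto
    qed
  qed
  have sub: "sig l ` {0..<N} \<subseteq> {0..<N}" using rank_bound by (auto simp: sig_def)
  have "sig l ` {0..<N} = {0..<N}" using endo_inj_surj[OF _ sub inj] by simp
  then show "bij_betw (sig l) {0..<N} {0..<N}" using inj by (simp add: bij_betw_def)
next
  fix x assume "x \<notin> {0..<N}" then show "sig l x = x" by (simp add: sig_def)
qed

lemma rank_unique:
  assumes sp: "\<sigma> permutes {0..<N}"
    and adj: "\<forall>i. Suc i < N \<longrightarrow> R l (inv \<sigma> i) (inv \<sigma> (Suc i))"
    and p: "p < N"
  shows "\<sigma> p = rank l p"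
proof -
  have chain: "i < j \<Longrightarrow> j < N \<Longrightarrow> R l (inv \<sigma> i) (inv \<sigma> j)" for i j
  proof (induction j)
    case 0 then show ?case by simp
  next
    case (Suc j)
    show ?case
    proof (cases "i = j")
      case True then show ?thesis using adj Suc by simp
    next
      case False
      then have "R l (inv \<sigma> i) (inv \<sigma> j)" using Suc by simp
      moreover have "R l (inv \<sigma> j) (inv \<sigma> (Suc j))" using adj Suc by simp
      ultimately show ?thesis using R_trans by blast
    qed
  qed
  have inN: "\<sigma> q < N" if "q < N" for q using permutes_in_image[OF sp] that by simp
  have ord: "R l q r" if "q < N" "r < N" "\<sigma> q < \<sigma> r" for q r
    using chain[of "\<sigma> q" "\<sigma> r"] that inN permutes_inverses(2)[OF sp] by simp
  have seteq: "{q \<in> {0..<N}. R l q p} = {q \<in> {0..<N}. \<sigma> q < \<sigma> p}"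
  proof safe
    fix q assume q: "q \<in> {0..<N}" "R l q p"
    show "\<sigma> q < \<sigma> p"
    proof (rule ccontr)
      assume "\<not> \<sigma> q < \<sigma> p"
      then have "\<sigma> q = \<sigma> p \<or> \<sigma> p < \<sigma> q" by auto
      then show False
      proof
        assume "\<sigma> q = \<sigma> p"
        then have "q = p" using permutes_inj[OF sp] by (auto simp: inj_def)
        then show False using q R_irrefl by simp
      next
        assume "\<sigma> p < \<sigma> q"
        then have "R l p q" using ord p q by simp
        then show False using q R_asym by blast
      qed
    qed
  next
    fix q assume "q \<in> {0..<N}" "\<sigma> q < \<sigma> p"
    then show "R l q p" using ord p by simp
  qed
  have img: "\<sigma> ` {q \<in> {0..<N}. \<sigma> q < \<sigma> p} = {..<\<sigma> p}"
  proof safe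
    fix r assume r: "r < \<sigma> p"
    then have rN: "r < N" using inN[OF p] by simp
    have "inv \<sigma> r < N" using permutes_in_image[OF permutes_inv[OF sp]] rN by simp
    moreover have "\<sigma> (inv \<sigma> r) = r" using permutes_inverses(1)[OF sp] .
    ultimately show "r \<in> \<sigma> ` {q \<in> {0..<N}. \<sigma> q < \<sigma> p}" using r
      by (intro image_eqI[of _ _ "inv \<sigma> r"]) auto
  qed
  have "card {q \<in> {0..<N}. \<sigma> q < \<sigma> p} = card (\<sigma> ` {q \<in> {0..<N}. \<sigma> q < \<sigma> p})"
    using permutes_inj_on[OF sp] by (intro card_image[symmetric]) (auto intro: inj_on_subset)
  also have "\<dots> = \<sigma> p" using img by simp
  finally show ?thesis unfolding rank_def seteq by simp
qed

definition binc :: "(nat \<Rightarrow> nat) \<Rightarrow> bool" where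
  "binc w \<longleftrightarrow> (\<forall>p q. p < q \<longrightarrow> q < N \<longrightarrow> blk p = blk q \<longrightarrow> w p < w q)"

lemma eta_w_Suc: "Suc i < N \<Longrightarrow> eta_w N \<beta> \<sigma> (Suc i) = eta_w N \<beta> \<sigma> i + (if desc_cond \<beta> \<sigma> i then 1 else 0)"
  by (simp add: eta_w_def)

lemma X_dec:
  assumes "(\<mu>, \<sigma>) \<in> X_beta N \<beta>"
  shows "\<sigma> permutes {0..<N}" "binc \<sigma>" "\<forall>j. N \<le> j \<longrightarrow> \<mu> j = 0"
    "\<forall>i. Suc i < N \<longrightarrow> \<mu> i \<le> \<mu> (Suc i)"
    "\<forall>i. Suc i < N \<longrightarrow> desc_cond \<beta> \<sigma> i \<longrightarrow> \<mu> i < \<mu> (Suc i)"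
proof -
  have m: "\<sigma> \<in> Wbar_beta_min N \<beta>" "\<mu> \<in> Pbar_minus_w N \<beta> \<sigma>"
    using assms unfolding X_beta_def by auto
  show "\<sigma> permutes {0..<N}" using m(1) by (simp add: Wbar_beta_min_def Wbar_def)
  show "binc \<sigma>" unfolding binc_def using min_binc[OF m(1)] by blast
  obtain e where e: "e \<in> Pbar_minus N" "\<mu> = (\<lambda>j. e j + eta_w N \<beta> \<sigma> j)"
    using m(2) unfolding Pbar_minus_w_def by blast
  show "\<forall>j. N \<le> j \<longrightarrow> \<mu> j = 0" using e by (simp add: Pbar_minus_def Pbar_def eta_w_def)
  have eall: "\<forall>i j. i < j \<and> j < N \<longrightarrow> e i - e j \<le> 0" using e(1) by (simp add: Pbar_minus_def)
  have emono: "e i \<le> e (Suc i)" if "Suc i < N" for i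
    using eall[rule_format, of i "Suc i"] that by simp
  have step: "\<mu> (Suc i) = e (Suc i) + eta_w N \<beta> \<sigma> i + (if desc_cond \<beta> \<sigma> i then 1 else 0)"
     "\<mu> i = e i + eta_w N \<beta> \<sigma> i" if "Suc i < N" for i
    using e(2) eta_w_Suc[OF that] by simp_all
  show "\<forall>i. Suc i < N \<longrightarrow> \<mu> i \<le> \<mu> (Suc i)"
  proof (intro allI impI)
    fix i assume i: "Suc i < N"
    show "\<mu> i \<le> \<mu> (Suc i)" using step[OF i] emono[OF i] by (cases "desc_cond \<beta> \<sigma> i") simp_all
  qed
  show "\<forall>i. Suc i < N \<longrightarrow> desc_cond \<beta> \<sigma> i \<longrightarrow> \<mu> i < \<mu> (Suc i)"
  proof (intro allI impI)
    fix i assume i: "Suc i < N" and dc: "desc_cond \<beta> \<sigma> i"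
    show "\<mu> i < \<mu> (Suc i)" using step[OF i] emono[OF i] dc by simp
  qed
qed

lemma X_intro:
  assumes sp: "\<sigma> permutes {0..<N}" and bi: "binc \<sigma>" and z: "\<forall>j. N \<le> j \<longrightarrow> \<mu> j = 0"
    and adj: "\<forall>i. Suc i < N \<longrightarrow> \<mu> i + (if desc_cond \<beta> \<sigma> i then 1 else 0) \<le> \<mu> (Suc i)"
  shows "(\<mu>, \<sigma>) \<in> X_beta N \<beta>"
proof -
  have wb: "\<sigma> \<in> Wbar_beta_min N \<beta>"
    unfolding Wbar_beta_min_def W_beta_def Waff_def Pbar_def Wbar_def
  proof (intro CollectI conjI ballI)
    show "\<sigma> permutes {0..<N}" by fact
    show "(\<lambda>_. 0::int, \<sigma>) \<in> {\<eta>. \<forall>i\<ge>N. \<eta> i = 0} \<times> {w. w permutes {0..<N}}" using sp by simp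
    fix u assume "u \<in> Wbar_beta N \<beta>"
    then have "bpres u" by (rule Wbar_beta_bpres)
    then show "len N (\<lambda>_. 0, \<sigma>) \<le> len N (wmult (\<lambda>_. 0, \<sigma>) (\<lambda>_. 0, u))"
      using bi unfolding binc_def by (intro len_mono_G[OF sp]) auto
  qed
  define e where "e = (\<lambda>j. \<mu> j - eta_w N \<beta> \<sigma> j)"
  have eadj: "\<forall>i. Suc i < N \<longrightarrow> e i \<le> e (Suc i)"
  proof (intro allI impI)
    fix i assume i: "Suc i < N"
    have "e (Suc i) = \<mu> (Suc i) - eta_w N \<beta> \<sigma> i - (if desc_cond \<beta> \<sigma> i then 1 else 0)"
      unfolding e_def using eta_w_Suc[OF i] by simp
    then show "e i \<le> e (Suc i)" using adj i unfolding e_def by (cases "desc_cond \<beta> \<sigma> i") auto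
  qed
  have "e \<in> Pbar_minus N"
    unfolding Pbar_minus_def Pbar_def
  proof (intro CollectI conjI allI impI)
    fix i assume "N \<le> i" then show "e i = 0" using z unfolding e_def eta_w_def by simp
  next
    fix i j assume "i < j \<and> j < N"
    then show "e i - e j \<le> 0" using mono_adj[OF eadj, of i j] by simp
  qed
  moreover have "\<mu> = (\<lambda>j. e j + eta_w N \<beta> \<sigma> j)" unfolding e_def by simp
  ultimately have "\<mu> \<in> Pbar_minus_w N \<beta> \<sigma>" unfolding Pbar_minus_w_def by blast
  then show ?thesis using wb unfolding X_beta_def by blast
qed

lemma Xkey:
  assumes x: "(\<mu>, \<sigma>) \<in> X_beta N \<beta>" and i: "Suc i < N"
  shows "R (\<lambda>p. \<mu> (\<sigma> p)) (inv \<sigma> i) (inv \<sigma> (Suc i))"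
proof -
  note d = X_dec[OF x]
  define p where "p = inv \<sigma> i"
  define q where "q = inv \<sigma> (Suc i)"
  have sp: "\<sigma> p = i" "\<sigma> q = Suc i" unfolding p_def q_def using permutes_inverses(1)[OF d(1)] by auto
  have pN: "p < N" "q < N" unfolding p_def q_def using permutes_in_image[OF permutes_inv[OF d(1)]] i by auto
  have le: "\<mu> i \<le> \<mu> (Suc i)" using d(4) i by simp
  show ?thesis unfolding p_def[symmetric] q_def[symmetric] R_def sp
  proof (cases "\<mu> i < \<mu> (Suc i)")
    case True then show "\<mu> i < \<mu> (Suc i) \<or> \<mu> i = \<mu> (Suc i) \<and> (blk q < blk p \<or> blk q = blk p \<and> p < q)" by simp
  next
    case False
    then have eq: "\<mu> i = \<mu> (Suc i)" using le by simp
    then have nd: "\<not> desc_cond \<beta> \<sigma> i" using d(5) i by auto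
    have "blk q < blk p \<or> blk q = blk p \<and> p < q"
    proof (cases "blk p = blk q")
      case True
      have "p \<noteq> q" using sp by auto
      moreover have "\<not> q < p"
      proof
        assume "q < p"
        then have "\<sigma> q < \<sigma> p" using d(2) True pN unfolding binc_def by simp
        then show False using sp by simp
      qed
      ultimately show ?thesis using True by simp
    next
      case False
      then have "\<not> same_block \<beta> p q" using same_block_iff by simp
      then have "\<not> p < q" using nd unfolding desc_cond_def p_def q_def by simp
      moreover have "p \<noteq> q" using sp by auto
      ultimately have "q < p" by simp
      then have "blk q \<le> blk p" using blk_mono by simp
      then show ?thesis using False by simp
    qed
    then show "\<mu> i < \<mu> (Suc i) \<or> \<mu> i = \<mu> (Suc i) \<and> (blk q < blk p \<or> blk q = blk p \<and> p < q)" using eq by simp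
  qed
qed

lemma wmult_D: "wmult (\<lambda>_. 0, u) (wmult (\<eta>, w) (\<lambda>_. 0, v)) = (\<eta> \<circ> inv u, u \<circ> w \<circ> v)"
  by (simp add: wmult_def wact_def fun_eq_iff)

end

context bsetup begin

lemma block_interval:
  assumes m: "m < length \<beta>" "S m \<le> p" "p < S (Suc m)"
  shows "q \<in> {S m..<S (Suc m)} \<longleftrightarrow> q < N \<and> blk q = m"
proof
  have bN: "S (Suc m) \<le> N" using S_mono[of "Suc m" "length \<beta>"] m S_len by simp
  assume "q \<in> {S m..<S (Suc m)}"
  then show "q < N \<and> blk q = m" using blk_eq[OF m(1)] bN by auto
next
  assume q: "q < N \<and> blk q = m"
  then obtain m' where m': "m' < length \<beta>" "S m' \<le> q" "q < S (Suc m')" using exists_block by blast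
  have "m' = m" using blk_eq[OF m'] q by simp
  then show "q \<in> {S m..<S (Suc m)}" using m' by simp
qed

lemma bsorted_unique:
  fixes f :: "nat \<Rightarrow> int"
  assumes f: "\<forall>p q. p < q \<longrightarrow> q < N \<longrightarrow> blk p = blk q \<longrightarrow> f p \<le> f q"
    and g: "\<forall>p q. p < q \<longrightarrow> q < N \<longrightarrow> blk p = blk q \<longrightarrow> f (\<pi> p) \<le> f (\<pi> q)"
    and pi: "bpres \<pi>" and p: "p < N"
  shows "f (\<pi> p) = f p"
proof -
  obtain m where m: "m < length \<beta>" "S m \<le> p" "p < S (Suc m)" using exists_block p by blast
  define a where "a = S m"
  define b where "b = S (Suc m)"
  have I: "q \<in> {a..<b} \<longleftrightarrow> q < N \<and> blk q = m" for q unfolding a_def b_def by (rule block_interval[OF m])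
  have pp: "\<pi> permutes {0..<N}" and pb: "\<forall>q. blk (\<pi> q) = blk q" using pi bpres_def by auto
  have piN: "\<pi> q < N \<longleftrightarrow> q < N" for q using permutes_in_image[OF pp] by simp
  have img: "\<pi> ` {a..<b} = {a..<b}"
  proof safe
    fix q assume "q \<in> {a..<b}" then show "\<pi> q \<in> {a..<b}" using I piN pb by simp
  next
    fix r assume r: "r \<in> {a..<b}"
    have "blk (inv \<pi> r) = blk r" using pb[rule_format, of "inv \<pi> r"] permutes_inverses(1)[OF pp] by simp
    moreover have "inv \<pi> r < N" using permutes_in_image[OF permutes_inv[OF pp]] r I by simp
    ultimately have "inv \<pi> r \<in> {a..<b}" using I r by simp
    then show "r \<in> \<pi> ` {a..<b}"
      by (intro image_eqI[of _ _ "inv \<pi> r"]) (simp_all add: permutes_inverses(1)[OF pp])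
  qed
  define xs where "xs = map f [a..<b]"
  define ys where "ys = map (\<lambda>q. f (\<pi> q)) [a..<b]"
  have sx: "sorted xs" unfolding xs_def sorted_iff_nth_mono
  proof (intro allI impI)
    fix i j assume ij0: "i \<le> j" and ij1: "j < length (map f [a..<b])"
    have ij: "i \<le> j \<and> j < length (map f [a..<b])" using ij0 ij1 by simp
    then have ab: "a + i \<in> {a..<b}" "a + j \<in> {a..<b}" by auto
    then have ai: "a + i < N" "blk (a + i) = m" and aj: "a + j < N" "blk (a + j) = m"
      using I[of "a + i"] I[of "a + j"] by simp_all
    have "f (a + i) \<le> f (a + j)"
    proof (cases "i = j")
      case True then show ?thesis by simp
    next
      case False then have "a + i < a + j" using ij by simp
      then show ?thesis using f[rule_format, OF _ aj(1)] ai aj by simp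
    qed
    moreover have "[a..<b] ! i = a + i" "[a..<b] ! j = a + j" using ab by simp_all
    ultimately show "map f [a..<b] ! i \<le> map f [a..<b] ! j" using ij by simp
  qed
  have sy: "sorted ys" unfolding ys_def sorted_iff_nth_mono
  proof (intro allI impI)
    fix i j assume ij0: "i \<le> j" and ij1: "j < length (map (\<lambda>q. f (\<pi> q)) [a..<b])"
    have ij: "i \<le> j \<and> j < length (map (\<lambda>q. f (\<pi> q)) [a..<b])" using ij0 ij1 by simp
    then have ab: "a + i \<in> {a..<b}" "a + j \<in> {a..<b}" by auto
    then have ai: "a + i < N" "blk (a + i) = m" and aj: "a + j < N" "blk (a + j) = m"
      using I[of "a + i"] I[of "a + j"] by simp_all
    have "(\<lambda>q. f (\<pi> q)) (a + i) \<le> (\<lambda>q. f (\<pi> q)) (a + j)"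
    proof (cases "i = j")
      case True then show ?thesis by simp
    next
      case False then have "a + i < a + j" using ij by simp
      then show ?thesis using g[rule_format, OF _ aj(1)] ai aj by simp
    qed
    moreover have "[a..<b] ! i = a + i" "[a..<b] ! j = a + j" using ab by simp_all
    ultimately show "map (\<lambda>q. f (\<pi> q)) [a..<b] ! i \<le> map (\<lambda>q. f (\<pi> q)) [a..<b] ! j" using ij by simp
  qed
  have d1: "distinct (map \<pi> [a..<b])"
    by (simp add: distinct_map permutes_inj_on[OF pp])
  have "mset (map \<pi> [a..<b]) = mset [a..<b]"
    using set_eq_iff_mset_eq_distinct[OF d1, of "[a..<b]"] img by simp
  moreover have "ys = map f (map \<pi> [a..<b])" unfolding ys_def by simp
  ultimately have "mset ys = mset xs" unfolding xs_def by (simp only: mset_map)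
  then have "sort xs = ys" by (rule properties_for_sort[OF _ sy])
  moreover have "sort xs = xs" by (rule sorted_sort_id[OF sx])
  ultimately have xy: "xs = ys" by simp
  have pa: "p - a < b - a" "a \<le> p" using m unfolding a_def b_def by auto
  then have "xs ! (p - a) = f p" unfolding xs_def by simp
  moreover have "ys ! (p - a) = f (\<pi> p)" using pa unfolding ys_def by simp
  ultimately show ?thesis using xy by simp
qed

lemma sum_swap:
  fixes g :: "nat \<Rightarrow> int"
  assumes i: "Suc i < N"
  shows "(\<Sum>q<N. int q * g (transpose i (Suc i) q)) = (\<Sum>q<N. int q * g q) + g i - g (Suc i)"
proof -
  have U: "{..<N} = {i, Suc i} \<union> ({..<N} - {i, Suc i})" using i by auto
  have D: "{i, Suc i} \<inter> ({..<N} - {i, Suc i}) = {}" by auto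
  have split: "(\<Sum>q<N. h q) = (\<Sum>q\<in>{i, Suc i}. h q) + (\<Sum>q\<in>{..<N} - {i, Suc i}. h q)" for h :: "nat \<Rightarrow> int"
    by (subst U, rule sum.union_disjoint) auto
  have rest: "(\<Sum>q\<in>{..<N} - {i, Suc i}. int q * g (transpose i (Suc i) q)) = (\<Sum>q\<in>{..<N} - {i, Suc i}. int q * g q)"
    by (rule sum.cong) (auto simp: transpose_def)
  show ?thesis
    unfolding split[of "\<lambda>q. int q * g (transpose i (Suc i) q)"] split[of "\<lambda>q. int q * g q"] rest
    by (simp add: algebra_simps)
qed

lemma sort_exists:
  fixes lam :: "nat \<Rightarrow> int"
  shows "\<exists>v \<in> Wbar_beta N \<beta>. \<forall>p q. p < q \<longrightarrow> q < N \<longrightarrow> blk p = blk q \<longrightarrow> lam (v p) \<le> lam (v q)"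
proof -
  define K where "K = (\<Sum>q<N. \<bar>lam q\<bar>)"
  define B where "B = int N * (int N * K)"
  define T where "T = (\<lambda>v. \<Sum>q<N. int q * lam (v q))"
  have K0: "0 \<le> K" unfolding K_def by (auto intro: sum_nonneg)
  have bound: "T v \<le> B" if v: "v \<in> Wbar_beta N \<beta>" for v
  proof -
    have vp: "v permutes {0..<N}" using Wbar_beta_bpres[OF v] bpres_def by simp
    have "int q * lam (v q) \<le> int N * K" if q: "q < N" for q
    proof -
      have "v q < N" using permutes_in_image[OF vp] q by simp
      then have "\<bar>lam (v q)\<bar> \<le> K" unfolding K_def by (intro member_le_sum) auto
      then have "int q * lam (v q) \<le> int q * K"
        by (intro mult_left_mono) auto
      also have "\<dots> \<le> int N * K" using q K0 by (intro mult_right_mono) auto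
      finally show ?thesis .
    qed
    then have "T v \<le> (\<Sum>q<N. int N * K)" unfolding T_def by (intro sum_mono) auto
    then show ?thesis unfolding B_def by simp
  qed
  have main: "\<forall>v0. v0 \<in> Wbar_beta N \<beta> \<longrightarrow> nat (B - T v0) = n \<longrightarrow>
     (\<exists>v \<in> Wbar_beta N \<beta>. \<forall>p q. p < q \<longrightarrow> q < N \<longrightarrow> blk p = blk q \<longrightarrow> lam (v p) \<le> lam (v q))" for n
  proof (induction n rule: less_induct)
    case (less n)
    show ?case
    proof (intro allI impI)
      fix v0 assume v0: "v0 \<in> Wbar_beta N \<beta>" and n: "nat (B - T v0) = n"
      show "\<exists>v \<in> Wbar_beta N \<beta>. \<forall>p q. p < q \<longrightarrow> q < N \<longrightarrow> blk p = blk q \<longrightarrow> lam (v p) \<le> lam (v q)"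
      proof (cases "\<forall>i. Suc i < N \<longrightarrow> blk i = blk (Suc i) \<longrightarrow> lam (v0 i) \<le> lam (v0 (Suc i))")
        case True
        then show ?thesis using v0 adj_le[of "\<lambda>i. lam (v0 i)"] by (intro bexI[of _ v0]) auto
      next
        case False
        then obtain i where i: "Suc i < N" "blk i = blk (Suc i)" "lam (v0 (Suc i)) < lam (v0 i)"
          by auto
        define v1 where "v1 = v0 \<circ> transpose i (Suc i)"
        have v1: "v1 \<in> Wbar_beta N \<beta>" unfolding v1_def using Wbar_beta_comp[OF v0 trans_in[OF i(1,2)]] .
        have "T v1 = T v0 + lam (v0 i) - lam (v0 (Suc i))"
          unfolding T_def v1_def using sum_swap[OF i(1), of "\<lambda>q. lam (v0 q)"] by simp
        then have "nat (B - T v1) < n" using n i(3) bound[OF v1] by simp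
        then show ?thesis using less.IH v1 by blast
      qed
    qed
  qed
  show ?thesis using main[of "nat (B - T id)"] Wbar_beta.id by blast
qed

end

context bsetup begin

lemma X_sorted:
  assumes y: "(\<mu>, \<sigma>) \<in> X_beta N \<beta>"
  shows "\<forall>p q. p < q \<longrightarrow> q < N \<longrightarrow> blk p = blk q \<longrightarrow> \<mu> (\<sigma> p) \<le> \<mu> (\<sigma> q)"
proof (intro allI impI)
  note d = X_dec[OF y]
  fix p q assume pq: "p < q" "q < N" "blk p = blk q"
  have "\<sigma> p < \<sigma> q" using d(2) pq unfolding binc_def by simp
  moreover have "\<sigma> q < N" using permutes_in_image[OF d(1)] pq by simp
  ultimately show "\<mu> (\<sigma> p) \<le> \<mu> (\<sigma> q)" using mono_adj[OF d(4), of "\<sigma> p" "\<sigma> q"] by simp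
qed

lemma uniq_core:
  assumes y1: "(\<mu>1, \<sigma>1) \<in> X_beta N \<beta>" and y2: "(\<mu>2, \<sigma>2) \<in> X_beta N \<beta>"
    and l1: "\<forall>p. \<mu>1 (\<sigma>1 p) = lam (v1 p)" and l2: "\<forall>p. \<mu>2 (\<sigma>2 p) = lam (v2 p)"
    and v1: "bpres v1" and v2: "bpres v2"
  shows "(\<mu>1, \<sigma>1) = (\<mu>2, \<sigma>2)"
proof -
  note d1 = X_dec[OF y1] and d2 = X_dec[OF y2]
  define f1 where "f1 = (\<lambda>p. \<mu>1 (\<sigma>1 p))"
  define f2 where "f2 = (\<lambda>p. \<mu>2 (\<sigma>2 p))"
  define \<pi> where "\<pi> = inv v1 \<circ> v2"
  have pib: "bpres \<pi>" unfolding \<pi>_def by (rule bpres_comp[OF bpres_inv[OF v1] v2])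
  have v1p: "v1 permutes {0..<N}" using v1 bpres_def by simp
  have fp: "f1 (\<pi> p) = f2 p" for p
    unfolding f1_def f2_def \<pi>_def using l1 l2 permutes_inverses(1)[OF v1p] by simp
  have s1: "\<forall>p q. p < q \<longrightarrow> q < N \<longrightarrow> blk p = blk q \<longrightarrow> f1 p \<le> f1 q"
    using X_sorted[OF y1] unfolding f1_def .
  have s2: "\<forall>p q. p < q \<longrightarrow> q < N \<longrightarrow> blk p = blk q \<longrightarrow> f1 (\<pi> p) \<le> f1 (\<pi> q)"
    using X_sorted[OF y2] unfolding fp f2_def .
  have eqf: "f2 p = f1 p" if "p < N" for p
    using bsorted_unique[OF s1 s2 pib that] fp by simp
  have r1: "\<sigma>1 p = rank f1 p" if "p < N" for p
    using rank_unique[OF d1(1) _ that] Xkey[OF y1, folded f1_def] by blast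
  have r2: "\<sigma>2 p = rank f1 p" if "p < N" for p
  proof -
    have "\<sigma>2 p = rank f2 p"
      using rank_unique[OF d2(1) _ that] Xkey[OF y2, folded f2_def] by blast
    also have "\<dots> = rank f1 p" using rank_cong[of f2 f1 p] eqf that by simp
    finally show ?thesis .
  qed
  have seq: "\<sigma>1 = \<sigma>2"
  proof
    fix p show "\<sigma>1 p = \<sigma>2 p"
    proof (cases "p < N")
      case True then show ?thesis using r1 r2 by simp
    next
      case False then show ?thesis using permutes_not_in[OF d1(1)] permutes_not_in[OF d2(1)] by simp
    qed
  qed
  have meq: "\<mu>1 = \<mu>2"
  proof
    fix j show "\<mu>1 j = \<mu>2 j"
    proof (cases "j < N")
      case True
      have iN: "inv \<sigma>1 j < N" using permutes_in_image[OF permutes_inv[OF d1(1)]] True by simp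
      have "\<mu>1 j = f1 (inv \<sigma>1 j)" unfolding f1_def using permutes_inverses(1)[OF d1(1)] by simp
      also have "\<dots> = f2 (inv \<sigma>1 j)" using eqf[OF iN] by simp
      also have "\<dots> = \<mu>2 j" unfolding f2_def seq using permutes_inverses(1)[OF d2(1)] by simp
      finally show ?thesis .
    next
      case False then show ?thesis using d1(3) d2(3) by simp
    qed
  qed
  show ?thesis using seq meq by simp
qed

lemma D_ell:
  assumes "u permutes {0..<N}"
  shows "(\<eta> \<circ> inv u) ((u \<circ> w \<circ> v) p) = \<eta> (w (v p))"
  using permutes_inverses(2)[OF assms] by simp

end

theorem proposition2p13:
  fixes N :: nat and \<beta> :: "nat list"
  assumes "N \<ge> 2" and "ordered_partition N \<beta>"
  shows "X_beta N \<beta> \<subseteq> Waff N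
    \<and> (\<forall>x \<in> Waff N. \<exists>!y. y \<in> X_beta N \<beta> \<and>
          (\<exists>u v. u \<in> Wbar N \<and> v \<in> Wbar_beta N \<beta> \<and>
                 y = wmult (\<lambda>_. 0, u) (wmult x (\<lambda>_. 0, v))))
    \<and> X_beta N \<beta> \<subseteq> W_beta N \<beta>"
proof -
  interpret bsetup N \<beta> using assms(2) by unfold_locales (simp add: ordered_partition_def)
  have P1: "X_beta N \<beta> \<subseteq> Waff N"
  proof
    fix y assume y: "y \<in> X_beta N \<beta>"
    obtain \<mu> \<sigma> where yy: "y = (\<mu>, \<sigma>)" by (cases y)
    note d = X_dec[OF y[unfolded yy]]
    show "y \<in> Waff N" unfolding yy Waff_def Pbar_def Wbar_def using d(1) d(3) by auto
  qed
  have P3: "X_beta N \<beta> \<subseteq> W_beta N \<beta>"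
  proof
    fix y assume y: "y \<in> X_beta N \<beta>"
    obtain \<mu> \<sigma> where yy: "y = (\<mu>, \<sigma>)" by (cases y)
    have yX: "(\<mu>, \<sigma>) \<in> X_beta N \<beta>" using y yy by simp
    note d = X_dec[OF yX]
    have "(\<mu>, \<sigma>) \<in> Waff N" using P1 yX by auto
    moreover have "\<forall>u\<in>Wbar_beta N \<beta>. len N (\<mu>, \<sigma>) \<le> len N (wmult (\<mu>, \<sigma>) (\<lambda>_. 0, u))"
    proof
      fix u assume u: "u \<in> Wbar_beta N \<beta>"
      show "len N (\<mu>, \<sigma>) \<le> len N (wmult (\<mu>, \<sigma>) (\<lambda>_. 0, u))"
        using len_mono_G[OF d(1) _ X_sorted[OF yX] Wbar_beta_bpres[OF u]] d(2) unfolding binc_def by blast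
    qed
    ultimately show "y \<in> W_beta N \<beta>" unfolding yy W_beta_def by blast
  qed
  have P2: "\<forall>x \<in> Waff N. \<exists>!y. y \<in> X_beta N \<beta> \<and>
          (\<exists>u v. u \<in> Wbar N \<and> v \<in> Wbar_beta N \<beta> \<and>
                 y = wmult (\<lambda>_. 0, u) (wmult x (\<lambda>_. 0, v)))"
  proof
    fix x assume x: "x \<in> Waff N"
    obtain \<eta> w where xx: "x = (\<eta>, w)" by (cases x)
    have eP: "\<forall>i\<ge>N. \<eta> i = 0" and wp: "w permutes {0..<N}"
      using x xx by (auto simp: Waff_def Pbar_def Wbar_def)
    define lam where "lam = (\<lambda>p. \<eta> (w p))"
    obtain v where v: "v \<in> Wbar_beta N \<beta>"
      and vs: "\<forall>p q. p < q \<longrightarrow> q < N \<longrightarrow> blk p = blk q \<longrightarrow> lam (v p) \<le> lam (v q)"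
      using sort_exists[of lam] by blast
    have vb: "bpres v" using Wbar_beta_bpres[OF v] .
    have vp: "v permutes {0..<N}" using vb bpres_def by simp
    define l where "l = (\<lambda>p. lam (v p))"
    define \<sigma> where "\<sigma> = sig l"
    have sp: "\<sigma> permutes {0..<N}" unfolding \<sigma>_def by (rule sig_perm)
    define \<mu> where "\<mu> = (\<lambda>j. if j < N then l (inv \<sigma> j) else 0)"
    define u where "u = \<sigma> \<circ> inv v \<circ> inv w"
    have up: "u permutes {0..<N}" unfolding u_def
      by (rule permutes_compose[OF permutes_inv[OF wp] permutes_compose[OF permutes_inv[OF vp] sp]])
    have yX: "(\<mu>, \<sigma>) \<in> X_beta N \<beta>"
    proof (rule X_intro[OF sp])
      show "binc \<sigma>" unfolding binc_def
      proof (intro allI impI)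
        fix p q assume pq: "p < q" "q < N" "blk p = blk q"
        have "l p \<le> l q" using vs pq unfolding l_def by blast
        then have "R l p q" unfolding R_def using pq by auto
        then show "\<sigma> p < \<sigma> q" unfolding \<sigma>_def using sig_iff[of p q l] pq by simp
      qed
      show "\<forall>j. N \<le> j \<longrightarrow> \<mu> j = 0" unfolding \<mu>_def by simp
      show "\<forall>i. Suc i < N \<longrightarrow> \<mu> i + (if desc_cond \<beta> \<sigma> i then 1 else 0) \<le> \<mu> (Suc i)"
      proof (intro allI impI)
        fix i assume i: "Suc i < N"
        define p where "p = inv \<sigma> i"
        define q where "q = inv \<sigma> (Suc i)"
        have sq: "\<sigma> p = i" "\<sigma> q = Suc i" unfolding p_def q_def using permutes_inverses(1)[OF sp] by auto
        have pN: "p < N" "q < N" unfolding p_def q_def using permutes_in_image[OF permutes_inv[OF sp]] i by auto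
        have Rpq: "R l p q" using sig_iff[of p q l] pN sq unfolding \<sigma>_def by simp
        have mu: "\<mu> i = l p" "\<mu> (Suc i) = l q" unfolding \<mu>_def p_def q_def using i by auto
        show "\<mu> i + (if desc_cond \<beta> \<sigma> i then 1 else 0) \<le> \<mu> (Suc i)"
        proof (cases "desc_cond \<beta> \<sigma> i")
          case True
          then have "p < q" "\<not> same_block \<beta> p q" unfolding desc_cond_def p_def q_def by auto
          then have "blk p \<noteq> blk q" "blk p \<le> blk q" using same_block_iff pN blk_mono by auto
          then have "l p < l q" using Rpq unfolding R_def by auto
          then show ?thesis using True mu by simp
        next
          case False then show ?thesis using Rpq mu unfolding R_def by auto
        qed
      qed
    qed
    have c: "u \<circ> w \<circ> v = \<sigma>" unfolding u_def
      by (simp add: fun_eq_iff permutes_inverses[OF wp] permutes_inverses[OF vp])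
    have iu: "inv u j = w (v (inv \<sigma> j))" for j
    proof -
      have "u (w (v (inv \<sigma> j))) = j" unfolding u_def
        using permutes_inverses[OF wp] permutes_inverses[OF vp] permutes_inverses[OF sp] by simp
      then show ?thesis using permutes_inverses(2)[OF up, of "w (v (inv \<sigma> j))"] by simp
    qed
    have m: "\<eta> \<circ> inv u = \<mu>"
    proof
      fix j show "(\<eta> \<circ> inv u) j = \<mu> j"
      proof (cases "j < N")
        case True then show ?thesis unfolding \<mu>_def l_def lam_def using iu by simp
      next
        case False
        then have "inv \<sigma> j = j" using permutes_not_in[OF permutes_inv[OF sp]] by simp
        moreover have "v j = j" "w j = j" using False permutes_not_in[OF vp] permutes_not_in[OF wp] by auto
        ultimately show ?thesis unfolding \<mu>_def using iu eP False by simp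
      qed
    qed
    have yD: "(\<mu>, \<sigma>) = wmult (\<lambda>_. 0, u) (wmult x (\<lambda>_. 0, v))"
      by (simp only: xx wmult_D c m)
    have uW: "u \<in> Wbar N" using up by (simp add: Wbar_def)
    have l0: "\<forall>p. \<mu> (\<sigma> p) = lam (v p)"
      using D_ell[OF up, of \<eta> w v] unfolding c m lam_def by simp
    show "\<exists>!y. y \<in> X_beta N \<beta> \<and>
          (\<exists>u v. u \<in> Wbar N \<and> v \<in> Wbar_beta N \<beta> \<and> y = wmult (\<lambda>_. 0, u) (wmult x (\<lambda>_. 0, v)))"
    proof (rule ex1I[of _ "(\<mu>, \<sigma>)"])
      show "(\<mu>, \<sigma>) \<in> X_beta N \<beta> \<and>
          (\<exists>u v. u \<in> Wbar N \<and> v \<in> Wbar_beta N \<beta> \<and> (\<mu>, \<sigma>) = wmult (\<lambda>_. 0, u) (wmult x (\<lambda>_. 0, v)))"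
        using yX yD uW v by blast
    next
      fix y assume y: "y \<in> X_beta N \<beta> \<and>
          (\<exists>u v. u \<in> Wbar N \<and> v \<in> Wbar_beta N \<beta> \<and> y = wmult (\<lambda>_. 0, u) (wmult x (\<lambda>_. 0, v)))"
      then obtain u2 v2 where u2: "u2 \<in> Wbar N" and v2: "v2 \<in> Wbar_beta N \<beta>"
        and yy: "y = wmult (\<lambda>_. 0, u2) (wmult x (\<lambda>_. 0, v2))" by blast
      have u2p: "u2 permutes {0..<N}" using u2 by (simp add: Wbar_def)
      have yeq: "y = (\<eta> \<circ> inv u2, u2 \<circ> w \<circ> v2)" using yy unfolding xx wmult_D .
      have y2X: "(\<eta> \<circ> inv u2, u2 \<circ> w \<circ> v2) \<in> X_beta N \<beta>" using y yeq by simp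
      have l2: "\<forall>p. (\<eta> \<circ> inv u2) ((u2 \<circ> w \<circ> v2) p) = lam (v2 p)"
        using D_ell[OF u2p, of \<eta> w v2] unfolding lam_def by simp
      show "y = (\<mu>, \<sigma>)"
        unfolding yeq by (rule uniq_core[OF y2X yX l2 l0 Wbar_beta_bpres[OF v2] vb])
    qed
  qed
  show ?thesis using P1 P2 P3 by blast
qed

end
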